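(* For any odd prime $p$, any integer $\alpha\ge1$ and any integer $n\ge0$, \[ b_4\!\left(p^{2\alpha}n+\frac{(8i+p)p^{2\alpha-1}-1}{8}\right)\equiv 0 \pmod 2 \] for each $i=1,2,\ldots,p-1$.
   Context: For a positive integer $\ell$, $b_\ell(n)$ denotes the number of partitions of $n$ having no part divisible by $\ell$. *)

theory Defs
  imports Main "HOL-Library.Multiset" "HOL-Computational_Algebra.Primes"
begin

definition partitions_no_part_dvd :: "nat \<Rightarrow> nat \<Rightarrow> nat multiset set" where
  "partitions_no_part_dvd l n =
     {M. (\<forall>x\<in>#M. 0 < x \<and> \<not> l dvd x) \<and> sum_mset M = n}"

definition b :: "nat \<Rightarrow> nat \<Rightarrow> nat" where
  "b l n = card (partitions_no_part_dvd l n)"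

end

theory Submission
  imports Defs "HOL-Computational_Algebra.Formal_Power_Series" "HOL-Library.Z2"
begin
unbundle fps_syntax
type_synonym F = "bit fps"


definition cg :: "nat \<Rightarrow> F \<Rightarrow> F \<Rightarrow> bool" where
  "cg n f g \<longleftrightarrow> fps_X ^ Suc n dvd (f - g)"

lemma cg_refl[simp]: "cg n f f" by (simp add: cg_def)
lemma cg_sym: "cg n f g \<Longrightarrow> cg n g f"
  unfolding cg_def by (metis dvd_minus_iff minus_diff_eq)
lemma cg_trans: "cg n f g \<Longrightarrow> cg n g h \<Longrightarrow> cg n f h"
proof -
  assume "cg n f g" "cg n g h"
  moreover have "f - h = (f - g) + (g - h)" by simp
  ultimately show ?thesis unfolding cg_def by (metis dvd_add)
qed
lemma cg_mult: "cg n f f' \<Longrightarrow> cg n g g' \<Longrightarrow> cg n (f*g) (f'*g')"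
proof -
  assume a: "cg n f f'" "cg n g g'"
  have "f*g - f'*g' = f*(g-g') + (f-f')*g'" by (simp add: algebra_simps)
  with a show ?thesis unfolding cg_def by (metis dvd_add dvd_mult dvd_mult2)
qed
lemma cg_nth: "cg n f g \<Longrightarrow> i \<le> n \<Longrightarrow> f $ i = g $ i"
proof -
  assume "cg n f g" "i \<le> n"
  then obtain h where h: "f - g = fps_X ^ Suc n * h" unfolding cg_def by (auto elim: dvdE)
  have "(f - g) $ i = 0" unfolding h fps_X_power_mult_nth using \<open>i \<le> n\<close> by simp
  thus ?thesis by (metis fps_sub_nth right_minus_eq)
qed
lemma cg_cancel:
  assumes "cg n (f*e) (g*e)" "e $ 0 \<noteq> 0"
  shows "cg n f g"
proof -
  have "(f*e - g*e) * inverse e = (f - g) * (e * inverse e)" by (simp add: algebra_simps)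
  hence "f - g = (f*e - g*e) * inverse e"
    using inverse_mult_eq_1'[OF assms(2)] by simp
  thus ?thesis using assms(1) unfolding cg_def by (metis dvd_mult2)
qed

lemma bitfps_neg: "- (f::F) = f"
  by (simp add: fps_eq_iff)
lemma bitfps_minus: "(f::F) - g = f + g"
  by (metis bitfps_neg diff_conv_add_uminus)
lemma bit_add_self: "(x::bit) + x = 0" by (cases x) simp_all
lemma bitfps_two: "(f::F) + f = 0"
  by (rule fps_ext) (simp only: fps_add_nth bit_add_self fps_zero_nth)
lemma bitfps_2: "(2::F) = 0"
proof -
  have "(2::F) = 1 + 1" by simp
  also have "\<dots> = 0" by (rule bitfps_two)
  finally show ?thesis .
qed

lemma one_plus_sq: "(1 + fps_X ^ k :: F) * (1 + fps_X ^ k) = 1 + fps_X ^ (2*k)"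
proof -
  have "(1 + fps_X ^ k :: F) * (1 + fps_X ^ k) = 1 + (fps_X ^ k + fps_X ^ k) + fps_X^k * fps_X^k"
    by (simp add: algebra_simps)
  also have "\<dots> = 1 + fps_X^k * fps_X^k" by (simp only: bitfps_two add_0_right)
  also have "\<dots> = 1 + fps_X ^ (2*k)" by (simp add: power_add[symmetric] mult_2)
  finally show ?thesis .
qed

lemma cg_big: "n < e \<Longrightarrow> cg n (1 + fps_X ^ e) 1"
proof -
  assume "n < e"
  have "(1 + fps_X^e) - 1 = (fps_X^e :: F)" by simp
  thus ?thesis unfolding cg_def using le_imp_power_dvd[of "Suc n" e] \<open>n < e\<close> by simp
qed

lemma cg_prod1: "finite T \<Longrightarrow> (\<And>i. i \<in> T \<Longrightarrow> cg n (f i) 1) \<Longrightarrow> cg n (\<Prod>i\<in>T. f i) 1"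
proof (induction T rule: finite_induct)
  case empty then show ?case by simp
next
  case (insert x T) then show ?case using cg_mult[of n "f x" 1 "prod f T" 1] by simp
qed

lemma cg_prod: "finite T \<Longrightarrow> (\<And>i. i \<in> T \<Longrightarrow> cg n (f i) (g i)) \<Longrightarrow> cg n (\<Prod>i\<in>T. f i) (\<Prod>i\<in>T. g i)"
proof (induction T rule: finite_induct)
  case empty then show ?case by simp
next
  case (insert x T) then show ?case using cg_mult by simp
qed

lemma trunc_prod:
  assumes "finite T" "S \<subseteq> T" "\<And>i. i \<in> T - S \<Longrightarrow> n < h i"
  shows "cg n (\<Prod>i\<in>T. 1 + fps_X ^ h i) (\<Prod>i\<in>S. 1 + fps_X ^ h i)"
proof -
  have e: "(\<Prod>i\<in>T. 1 + fps_X ^ h i :: F) = (\<Prod>i\<in>T-S. 1 + fps_X ^ h i) * (\<Prod>i\<in>S. 1 + fps_X ^ h i)"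
    using prod.subset_diff[OF assms(2) assms(1)] by simp
  have c: "cg n (\<Prod>i\<in>T-S. 1 + fps_X ^ h i) 1"
    using assms by (intro cg_prod1 cg_big) auto
  have "cg n ((\<Prod>i\<in>T-S. 1 + fps_X ^ h i) * (\<Prod>i\<in>S. 1 + fps_X ^ h i)) (1 * (\<Prod>i\<in>S. 1 + fps_X ^ h i))"
    by (rule cg_mult[OF c cg_refl])
  thus ?thesis unfolding e by simp
qed

lemma X_pow_nth0: "0 < e \<Longrightarrow> (fps_X ^ e :: F) $ 0 = 0"
  by (simp add: fps_X_power_iff)

lemma prod_nth0: "(\<Prod>i\<in>T. 1 + fps_X ^ h i :: F) $ 0 = 1" if "\<And>i. i\<in>T \<Longrightarrow> 0 < h i"
  using that
proof (induction T rule: infinite_finite_induct)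
  case (insert x F)
  have "(1 + fps_X ^ h x :: F) $ 0 = 1" using insert X_pow_nth0[of "h x"] by simp
  then show ?case using insert by simp
qed auto


definition geo :: "nat \<Rightarrow> F" where "geo k = Abs_fps (\<lambda>j. of_bool (k dvd j))"
definition SK :: "nat set \<Rightarrow> nat \<Rightarrow> nat multiset set" where
  "SK K n = {M. set_mset M \<subseteq> K \<and> sum_mset M = n}"

lemma ofb_mult: "(of_bool c :: bit) * x = (if c then x else 0)"
  by (cases c) (simp_all del: mult_bit_eq_and)

lemma sum_dvd_reindex:
  fixes n k :: nat and a :: "nat \<Rightarrow> bit"
  assumes "0 < k"
  shows "(\<Sum>i=0..n. (of_bool (k dvd i) :: bit) * a (n - i)) = (\<Sum>j\<le>n div k. a (n - j*k))"
proof -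
  have "(\<Sum>i=0..n. (of_bool (k dvd i) :: bit) * a (n - i)) = (\<Sum>i\<in>{i\<in>{0..n}. k dvd i}. a (n - i))"
    unfolding ofb_mult by (rule sum.inter_filter[symmetric]) (rule finite_atLeastAtMost)
  also have "{i\<in>{0..n}. k dvd i} = (\<lambda>j. j*k) ` {..n div k}"
  proof (intro set_eqI iffI)
    fix i assume "i \<in> {i\<in>{0..n}. k dvd i}"
    then obtain j where "i = j*k" "j*k \<le> n" by (metis (no_types, lifting) atLeastAtMost_iff dvd_def mem_Collect_eq mult.commute)
    thus "i \<in> (\<lambda>j. j*k) ` {..n div k}" using assms by (auto simp: less_eq_div_iff_mult_less_eq)
  next
    fix i assume "i \<in> (\<lambda>j. j*k) ` {..n div k}"
    then obtain j where "i = j*k" "j \<le> n div k" by auto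
    thus "i \<in> {i\<in>{0..n}. k dvd i}" using assms by (auto simp: less_eq_div_iff_mult_less_eq)
  qed
  also have "(\<Sum>i\<in>(\<lambda>j. j*k) ` {..n div k}. a (n - i)) = (\<Sum>j\<le>n div k. a (n - j*k))"
    using assms by (subst sum.reindex) (auto simp: inj_on_def)
  finally show ?thesis .
qed

lemma SK_empty: "SK {} n = (if n = 0 then {{#}} else {})"
  by (auto simp: SK_def)

lemma SK_insert:
  assumes "k \<notin> K" "0 < k"
  shows "SK (insert k K) n = (\<Union>j\<in>{..n div k}. (\<lambda>M. M + replicate_mset j k) ` SK K (n - j*k))"
proof (intro set_eqI iffI)
  fix M assume "M \<in> SK (insert k K) n"
  hence M: "set_mset M \<subseteq> insert k K" "sum_mset M = n" by (auto simp: SK_def)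
  define j where "j = count M k"
  define M' where "M' = filter_mset (\<lambda>x. x \<noteq> k) M"
  have split: "M = M' + replicate_mset j k"
    unfolding M'_def j_def by (metis add.commute filter_eq_replicate_mset multiset_partition)
  have sM': "set_mset M' \<subseteq> K" using M(1) unfolding M'_def by auto
  have "sum_mset M = sum_mset M' + j*k" by (subst split) simp
  hence jk: "j*k \<le> n" "sum_mset M' = n - j*k" using M(2) by auto
  hence "j \<le> n div k" using assms by (simp add: less_eq_div_iff_mult_less_eq)
  moreover have "M' \<in> SK K (n - j*k)" using sM' jk by (simp add: SK_def)
  ultimately show "M \<in> (\<Union>j\<in>{..n div k}. (\<lambda>M. M + replicate_mset j k) ` SK K (n - j*k))"
    using split by blast
next
  fix M assume "M \<in> (\<Union>j\<in>{..n div k}. (\<lambda>M. M + replicate_mset j k) ` SK K (n - j*k))"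
  then obtain j M' where "j \<le> n div k" "M' \<in> SK K (n - j*k)" "M = M' + replicate_mset j k" by auto
  moreover have "j*k \<le> n" using \<open>j \<le> n div k\<close> assms by (simp add: less_eq_div_iff_mult_less_eq)
  ultimately show "M \<in> SK (insert k K) n" by (auto simp: SK_def split: if_splits)
qed

lemma SK_count:
  assumes "finite K" "0 \<notin> K"
  shows "finite (SK K n) \<and> of_nat (card (SK K n)) = (\<Prod>k\<in>K. geo k) $ n"
  using assms
proof (induction K arbitrary: n rule: finite_induct)
  case empty then show ?case by (simp add: SK_empty)
next
  case (insert k K)
  have k0: "0 < k" using insert by auto
  have IH: "\<And>m. finite (SK K m) \<and> of_nat (card (SK K m)) = (\<Prod>k\<in>K. geo k) $ m"
    using insert by auto
  let ?f = "\<lambda>j. (\<lambda>M. M + replicate_mset j k) ` SK K (n - j*k)"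
  have fin: "\<And>j. finite (?f j)" using IH by auto
  have disj: "\<And>i j. i \<noteq> j \<Longrightarrow> ?f i \<inter> ?f j = {}"
  proof -
    fix i j :: nat assume "i \<noteq> j"
    { fix M assume "M \<in> ?f i" "M \<in> ?f j"
      then obtain A B where AB: "A \<in> SK K (n - i*k)" "B \<in> SK K (n - j*k)"
        "M = A + replicate_mset i k" "M = B + replicate_mset j k" by auto
      have "count A k = 0" "count B k = 0" using AB(1,2) insert(2) by (auto simp: SK_def count_eq_zero_iff)
      have "count M k = i" using AB(3) \<open>count A k = 0\<close> by simp
      moreover have "count M k = j" using AB(4) \<open>count B k = 0\<close> by simp
      ultimately have False using \<open>i \<noteq> j\<close> by simp }
    thus "?f i \<inter> ?f j = {}" by blast
  qed
  have card_f: "\<And>j. card (?f j) = card (SK K (n - j*k))"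
    by (rule card_image) (auto simp: inj_on_def)
  have e: "SK (insert k K) n = (\<Union>j\<in>{..n div k}. ?f j)" using SK_insert[OF insert(2) k0] .
  have "finite (SK (insert k K) n)" unfolding e using fin by auto
  moreover have "card (SK (insert k K) n) = (\<Sum>j\<le>n div k. card (SK K (n - j*k)))"
    unfolding e by (subst card_UN_disjoint) (use fin disj card_f in auto)
  moreover have "(\<Prod>k\<in>insert k K. geo k) $ n = (\<Sum>j\<le>n div k. (\<Prod>k\<in>K. geo k) $ (n - j*k))"
  proof -
    have "(\<Prod>k\<in>insert k K. geo k) = geo k * (\<Prod>k\<in>K. geo k)" using insert by simp
    hence "(\<Prod>k\<in>insert k K. geo k) $ n = (\<Sum>i=0..n. (of_bool (k dvd i) :: bit) * (\<Prod>k\<in>K. geo k) $ (n - i))"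
      by (simp add: fps_mult_nth geo_def)
    also have "\<dots> = (\<Sum>j\<le>n div k. (\<Prod>k\<in>K. geo k) $ (n - j*k))"
      by (rule sum_dvd_reindex[OF k0])
    finally show ?thesis .
  qed
  ultimately show ?case using IH by simp
qed


fun qb :: "'a::comm_ring_1 \<Rightarrow> nat \<Rightarrow> nat \<Rightarrow> 'a" where
  "qb q 0 k = (if k = 0 then 1 else 0)"
| "qb q (Suc L) 0 = 1"
| "qb q (Suc L) (Suc k) = qb q L (Suc k) + q^(L-k) * qb q L k"

lemma qb_0[simp]: "qb q L 0 = 1" by (cases L) simp_all

lemma qb_zero: "L < k \<Longrightarrow> qb q L k = 0"
proof (induction L arbitrary: k)
  case 0 then show ?case by simp
next
  case (Suc L) then show ?case by (cases k) simp_all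
qed

definition tri :: "nat \<Rightarrow> nat" where "tri k = k*(k-1) div 2"

lemma tri_Suc: "tri (Suc k) = tri k + k"
proof -
  have "Suc k * k = k*(k-1) + 2*k" by (cases k) (simp_all add: algebra_simps)
  hence "tri (Suc k) = (k*(k-1) + 2*k) div 2" unfolding tri_def by simp
  thus ?thesis unfolding tri_def by simp
qed

lemma tri_0[simp]: "tri 0 = 0" by (simp add: tri_def)

lemma rothe:
  fixes q x y :: "'a::comm_ring_1"
  shows "(\<Prod>j<L. y + x*q^j) = (\<Sum>k\<le>L. q^tri k * qb q L k * x^k * y^(L-k))"
proof (induction L)
  case 0 then show ?case by simp
next
  case (Suc L)
  define T where "T k = q^tri k * qb q L k * x^k * y^(L-k)" for k
  have IH: "(\<Prod>j<L. y + x*q^j) = (\<Sum>k\<le>L. T k)" using Suc unfolding T_def by simp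
  have A: "(\<Sum>k\<le>Suc L. q^tri k * qb q L k * x^k * y^(Suc L - k)) = (\<Sum>k\<le>L. T k) * y"
  proof -
    have "(\<Sum>k\<le>Suc L. q^tri k * qb q L k * x^k * y^(Suc L - k))
        = (\<Sum>k\<le>L. q^tri k * qb q L k * x^k * y^(Suc L - k))"
      by (simp add: qb_zero)
    also have "\<dots> = (\<Sum>k\<le>L. T k * y)"
      by (rule sum.cong) (auto simp: T_def Suc_diff_le)
    finally show ?thesis by (simp add: sum_distrib_right)
  qed
  have B: "(\<Sum>k\<le>L. q^tri (Suc k) * (q^(L-k) * qb q L k) * x^(Suc k) * y^(L - k))
      = (\<Sum>k\<le>L. T k) * (x*q^L)"
  proof -
    have "\<And>k. k \<le> L \<Longrightarrow> q^tri (Suc k) * (q^(L-k) * qb q L k) * x^(Suc k) * y^(L - k) = T k * (x*q^L)"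
    proof -
      fix k assume "k \<le> L"
      hence "tri (Suc k) + (L - k) = tri k + L" by (simp add: tri_Suc)
      hence "q^tri (Suc k) * q^(L-k) = q^tri k * q^L" by (metis power_add)
      thus "q^tri (Suc k) * (q^(L-k) * qb q L k) * x^(Suc k) * y^(L - k) = T k * (x*q^L)"
        unfolding T_def by (simp add: algebra_simps)
    qed
    thus ?thesis by (simp add: sum_distrib_right)
  qed
  have s1: "(\<Sum>k\<le>Suc L. q^tri k * qb q (Suc L) k * x^k * y^(Suc L-k))
      = y^Suc L + (\<Sum>k\<le>L. q^tri (Suc k) * qb q (Suc L) (Suc k) * x^(Suc k) * y^(L-k))"
    by (subst sum.atMost_Suc_shift) simp
  also have "\<dots> = y^Suc L + (\<Sum>k\<le>L. q^tri (Suc k) * qb q L (Suc k) * x^(Suc k) * y^(L-k))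
      + (\<Sum>k\<le>L. q^tri (Suc k) * (q^(L-k) * qb q L k) * x^(Suc k) * y^(L - k))"
    by (simp add: algebra_simps sum.distrib)
  also have s2: "y^Suc L + (\<Sum>k\<le>L. q^tri (Suc k) * qb q L (Suc k) * x^(Suc k) * y^(L-k))
      = (\<Sum>k\<le>Suc L. q^tri k * qb q L k * x^k * y^(Suc L - k))"
    by (subst sum.atMost_Suc_shift) simp
  also have "(\<Sum>k\<le>Suc L. q^tri k * qb q L k * x^k * y^(Suc L - k))
      + (\<Sum>k\<le>L. q^tri (Suc k) * (q^(L-k) * qb q L k) * x^(Suc k) * y^(L - k))
      = (\<Sum>k\<le>L. T k) * y + (\<Sum>k\<le>L. T k) * (x*q^L)"
    by (simp only: A B)
  also have "\<dots> = (\<Sum>k\<le>L. T k) * (y + x*q^L)" by (simp only: distrib_left)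
  also have "\<dots> = (\<Prod>j<Suc L. y + x*q^j)" by (simp only: IH[symmetric] prod.lessThan_Suc)
  finally show ?case by (rule sym)
qed

lemma qb_prod:
  fixes q :: "'a::comm_ring_1"
  shows "k \<le> M \<Longrightarrow> qb q M k * (\<Prod>i\<in>{1..k}. 1 - q^i) = (\<Prod>i\<in>{M-k<..M}. 1 - q^i)"
proof (induction M arbitrary: k)
  case 0 then show ?case by simp
next
  case (Suc M)
  show ?case
  proof (cases k)
    case 0 then show ?thesis by simp
  next
    case (Suc k')
    have k': "k' \<le> M" using Suc.prems Suc by simp
    have P: "(\<Prod>i\<in>{1..Suc k'}. 1 - q^i) = (\<Prod>i\<in>{1..k'}. 1 - q^i) * (1 - q^Suc k')"
      by (simp add: atLeastAtMostSuc_conv mult.commute)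
    have T: "(\<Prod>i\<in>{Suc M - Suc k'<..Suc M}. 1 - q^i) = (\<Prod>i\<in>{M-k'<..M}. 1 - q^i) * (1 - q^Suc M)"
    proof -
      have "{Suc M - Suc k'<..Suc M} = insert (Suc M) {M-k'<..M}" using k' by auto
      thus ?thesis by (simp add: mult.commute)
    qed
    have IH2: "qb q M k' * (\<Prod>i\<in>{1..k'}. 1 - q^i) = (\<Prod>i\<in>{M-k'<..M}. 1 - q^i)"
      using Suc.IH k' by simp
    show ?thesis
    proof (cases "k' = M")
      case True
      have "qb q (Suc M) k * (\<Prod>i\<in>{1..k}. 1 - q^i)
          = (qb q M k' * (\<Prod>i\<in>{1..k'}. 1 - q^i)) * (1 - q^Suc M)"
        using True Suc P by (simp add: qb_zero)
      then show ?thesis using IH2 T Suc by simp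
    next
      case False
      hence lt: "k' < M" using k' by simp
      have IH1: "qb q M (Suc k') * (\<Prod>i\<in>{1..Suc k'}. 1 - q^i) = (\<Prod>i\<in>{M - Suc k'<..M}. 1 - q^i)"
        by (rule Suc.IH) (use lt in simp)
      have S: "(\<Prod>i\<in>{M - Suc k'<..M}. 1 - q^i) = (1 - q^(M-k')) * (\<Prod>i\<in>{M-k'<..M}. 1 - q^i)"
      proof -
        have "{M - Suc k'<..M} = insert (M-k') {M-k'<..M}" using lt by auto
        thus ?thesis by simp
      qed
      have pw: "q^(M-k') * q^Suc k' = q^Suc M"
      proof -
        have "M - k' + Suc k' = Suc M" using lt by simp
        thus ?thesis by (metis power_add)
      qed
      have "qb q (Suc M) k * (\<Prod>i\<in>{1..k}. 1 - q^i)
          = qb q M (Suc k') * (\<Prod>i\<in>{1..Suc k'}. 1 - q^i)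
            + q^(M-k') * (qb q M k' * (\<Prod>i\<in>{1..k'}. 1 - q^i)) * (1 - q^Suc k')"
        using Suc P by (simp add: algebra_simps)
      also have "\<dots> = (\<Prod>i\<in>{M-k'<..M}. 1 - q^i) * ((1 - q^(M-k')) + q^(M-k') * (1 - q^Suc k'))"
        unfolding IH1 IH2 S by (simp add: algebra_simps)
      also have "(1 - q^(M-k')) + q^(M-k') * (1 - q^Suc k') = 1 - q^Suc M"
        using pw by (simp add: algebra_simps)
      finally show ?thesis using T Suc by simp
    qed
  qed
qed


definition OddP :: "nat \<Rightarrow> F" where
  "OddP M = (\<Prod>j<M. 1 + fps_X^(4*j+1)) * (\<Prod>j<M. 1 + fps_X^(4*j+3))"

definition ee :: "nat \<Rightarrow> nat \<Rightarrow> nat" where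
  "ee M k = nat (2*(int k - int M)^2 - (int k - int M))"

lemma quad_nonneg: "0 \<le> 2*(m::int)^2 - m"
proof (cases "m \<ge> 1")
  case True
  hence "m \<le> m^2" by (simp add: power2_eq_square)
  moreover have "0 \<le> m^2" by simp
  ultimately show ?thesis by linarith
next
  case False
  hence "m \<le> 0" by simp
  moreover have "0 \<le> m*m" by simp
  ultimately show ?thesis unfolding power2_eq_square by linarith
qed

lemma ee_int: "int (ee M k) = 2*(int k - int M)^2 - (int k - int M)"
  unfolding ee_def using quad_nonneg by simp

lemma prod_split: fixes a r :: nat shows "(\<Prod>j<a+r. g j) = (\<Prod>j<a. g j) * (\<Prod>j<r. g (a+j))"
  by (induction r) (simp_all add: mult.assoc)

lemma sum4: "(\<Sum>j<M. 4*j+1) + M = 2*M*(M::nat)"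
  by (induction M) (simp_all add: algebra_simps)

lemma tri2: "2 * tri k = k*(k-1)"
proof (induction k)
  case (Suc k) then show ?case by (cases k) (simp_all add: tri_Suc algebra_simps)
qed simp

lemma exp_eq:
  assumes "k \<le> 2*M" "c + M = 2*M*M"
  shows "4 * tri k + k + 4*M*(2*M - k) = c + 4*M*M + ee M k"
proof -
  have "int (4 * tri k + k + 4*M*(2*M - k)) = 2 * int (k*(k-1)) + int k + 4*int M*(2*int M - int k)"
  proof -
    have "int (2 * tri k) = int (k*(k-1))" using tri2[of k] by (simp only:)
    hence "4 * int (tri k) = 2 * int (k*(k-1))" by simp
    thus ?thesis using assms by (simp add: of_nat_diff)
  qed
  also have "int (k*(k-1)) = int k * (int k - 1)"
    by (cases k) (simp_all add: algebra_simps)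
  finally have L: "int (4 * tri k + k + 4*M*(2*M - k)) = 2 * (int k * (int k - 1)) + int k + 4*int M*(2*int M - int k)" .
  have "int c + int M = 2 * int M * int M" using assms(2) by (metis of_nat_add of_nat_mult of_nat_numeral)
  hence "int (c + 4*M*M + ee M k) = (2*int M*int M - int M) + 4*int M*int M + (2*(int k - int M)^2 - (int k - int M))"
    using ee_int[of M k] by (simp add: algebra_simps)
  with L have "int (4 * tri k + k + 4*M*(2*M - k)) = int (c + 4*M*M + ee M k)"
    by (simp add: algebra_simps power2_eq_square)
  thus ?thesis by (simp only: of_nat_eq_iff)
qed

lemma jtp: "OddP M = (\<Sum>k\<le>2*M. fps_X^(ee M k) * qb (fps_X^4) (2*M) k)"
proof -
  define c where "c = (\<Sum>j<M. 4*j+1)"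
  define f where "f j = (fps_X^(4*M) + fps_X * (fps_X^4)^j :: F)" for j
  have R: "(\<Prod>j<2*M. f j) = (\<Sum>k\<le>2*M. (fps_X^4)^tri k * qb (fps_X^4) (2*M) k * fps_X^k * (fps_X^(4*M))^(2*M-k))"
    unfolding f_def by (rule rothe)
  have f2: "f (M+j) = fps_X^(4*M) * (1 + fps_X^(4*j+1))" for j
    unfolding f_def by (simp add: algebra_simps power_add power_mult[symmetric])
  have f1: "j < M \<Longrightarrow> f j = fps_X^(4*j+1) * (1 + fps_X^(4*(M - Suc j)+3))" for j
  proof -
    assume "j < M"
    hence "4*j+1 + (4*(M - Suc j)+3) = 4*M" by simp
    hence "fps_X^(4*j+1) * fps_X^(4*(M - Suc j)+3) = (fps_X^(4*M) :: F)" by (metis power_add)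
    thus ?thesis unfolding f_def by (simp add: algebra_simps power_add power_mult[symmetric])
  qed
  have "(\<Prod>j<2*M. f j) = (\<Prod>j<M. f j) * (\<Prod>j<M. f (M+j))"
    using prod_split[of f M M] by (simp add: mult_2)
  also have "(\<Prod>j<M. f (M+j)) = fps_X^(4*M*M) * (\<Prod>j<M. 1 + fps_X^(4*j+1))"
    by (simp add: f2 prod.distrib power_mult)
  also have "(\<Prod>j<M. f j) = (\<Prod>j<M. fps_X^(4*j+1)) * (\<Prod>j<M. 1 + fps_X^(4*(M - Suc j)+3))"
    by (simp add: f1 prod.distrib)
  also have "(\<Prod>j<M. 1 + fps_X^(4*(M - Suc j)+3)) = (\<Prod>j<M. 1 + (fps_X^(4*j+3) :: F))"
    by (rule prod.nat_diff_reindex)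
  also have "(\<Prod>j<M. fps_X^(4*j+1)) = (fps_X^c :: F)"
    unfolding c_def by (simp add: power_sum)
  finally have L: "(\<Prod>j<2*M. f j) = fps_X^c * fps_X^(4*M*M) * OddP M"
    unfolding OddP_def by (simp add: algebra_simps)
  have "(\<Sum>k\<le>2*M. ((fps_X::F)^4)^tri k * qb (fps_X^4) (2*M) k * fps_X^k * (fps_X^(4*M))^(2*M-k))
      = (\<Sum>k\<le>2*M. fps_X^c * fps_X^(4*M*M) * (fps_X^(ee M k) * qb (fps_X^4) (2*M) k))"
  proof (rule sum.cong[OF refl])
    fix k assume "k \<in> {..2*M}"
    hence ex: "4 * tri k + k + 4*M*(2*M - k) = c + 4*M*M + ee M k" using exp_eq[of k M c] sum4[of M] unfolding c_def by simp
    have "(fps_X^4)^tri k * qb (fps_X^4) (2*M) k * fps_X^k * (fps_X^(4*M))^(2*M-k)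
        = fps_X^(4 * tri k + k + 4*M*(2*M - k)) * (qb (fps_X^4) (2*M) k :: F)"
      by (simp add: power_add power_mult[symmetric] algebra_simps)
    also have "\<dots> = fps_X^c * fps_X^(4*M*M) * (fps_X^(ee M k) * qb (fps_X^4) (2*M) k)"
      unfolding ex by (simp add: power_add algebra_simps)
    finally show "((fps_X::F)^4)^tri k * qb (fps_X^4) (2*M) k * fps_X^k * (fps_X^(4*M))^(2*M-k)
        = fps_X^c * fps_X^(4*M*M) * (fps_X^(ee M k) * qb (fps_X^4) (2*M) k)" .
  qed
  also have "\<dots> = fps_X^c * fps_X^(4*M*M) * (\<Sum>k\<le>2*M. fps_X^(ee M k) * qb (fps_X^4) (2*M) k)"
    by (simp add: sum_distrib_left)
  finally have "fps_X^c * fps_X^(4*M*M) * OddP M = fps_X^c * fps_X^(4*M*M) * (\<Sum>k\<le>2*M. fps_X^(ee M k) * qb (fps_X^4) (2*M) k)"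
    using L R by simp
  moreover have "fps_X^c * fps_X^(4*M*M) \<noteq> (0::F)" by simp
  ultimately show ?thesis by simp
qed


lemma Xpow_mult: "(fps_X^4)^i = (fps_X^(4*i) :: F)" by (simp add: power_mult)

lemma qb_prod_bit:
  assumes "k \<le> L"
  shows "qb (fps_X^4) L k * (\<Prod>i\<in>{1..k}. 1 + fps_X^(4*i)) = (\<Prod>i\<in>{L-k<..L}. 1 + (fps_X^(4*i) :: F))"
  using qb_prod[OF assms, of "fps_X^4 :: F"] by (simp add: bitfps_minus Xpow_mult)

definition Q :: "nat \<Rightarrow> F" where "Q n = (\<Prod>i\<in>{1..n}. 1 + fps_X^(4*i))"

lemma abs_bound: "2*(m::int)^2 - m \<le> n \<Longrightarrow> \<bar>m\<bar> \<le> n"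
proof -
  assume a: "2*m^2 - m \<le> n"
  have "\<bar>m\<bar> \<le> 2*m^2 - m"
  proof (cases "m \<ge> 0")
    case True
    hence "m \<le> m*m \<or> m = 0" by (metis mult_le_cancel_right1 not_less zero_less_iff_neq_zero int_one_le_iff_zero_less)
    thus ?thesis using True by (auto simp: power2_eq_square)
  next
    case False
    moreover have "0 \<le> m*m" by simp
    ultimately show ?thesis by (simp add: power2_eq_square)
  qed
  with a show ?thesis by simp
qed

lemma key_term:
  assumes "ee M k \<le> n" "M = 2*n+1" "k \<le> 2*M"
  shows "cg n (qb (fps_X^4) (2*M) k * Q n) 1"
proof -
  have "\<bar>int k - int M\<bar> \<le> int n" using abs_bound[of "int k - int M" "int n"] assms(1) ee_int[of M k] by simp
  hence nk: "n \<le> k" and nk2: "n \<le> 2*M - k" using assms(2,3) by auto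
  have h1: "cg n (\<Prod>i\<in>{1..k}. 1 + fps_X^(4*i)) (Q n)"
    unfolding Q_def using nk by (intro trunc_prod) auto
  have h2: "cg n (\<Prod>i\<in>{2*M-k<..2*M}. 1 + fps_X^(4*i)) (\<Prod>i\<in>{}. 1 + fps_X^(4*i))"
    using nk2 by (intro trunc_prod) auto
  have "cg n (qb (fps_X^4) (2*M) k * Q n) (qb (fps_X^4) (2*M) k * (\<Prod>i\<in>{1..k}. 1 + fps_X^(4*i)))"
    by (rule cg_mult[OF cg_refl cg_sym[OF h1]])
  also have "qb (fps_X^4) (2*M) k * (\<Prod>i\<in>{1..k}. 1 + fps_X^(4*i)) = (\<Prod>i\<in>{2*M-k<..2*M}. 1 + (fps_X^(4*i) :: F))"
    using qb_prod_bit assms(3) by simp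
  finally show ?thesis using h2 cg_trans by simp
qed

lemma coeff_zero:
  assumes "\<forall>k\<le>2*M. ee M k \<noteq> n" "M = 2*n+1"
  shows "(OddP M * Q n) $ n = 0"
proof -
  have "OddP M * Q n = (\<Sum>k\<le>2*M. fps_X^(ee M k) * (qb (fps_X^4) (2*M) k * Q n))"
    unfolding jtp by (simp add: sum_distrib_right mult.assoc)
  hence "(OddP M * Q n) $ n = (\<Sum>k\<le>2*M. (fps_X^(ee M k) * (qb (fps_X^4) (2*M) k * Q n)) $ n)"
    by (simp add: fps_sum_nth)
  also have "\<dots> = 0"
  proof (rule sum.neutral, rule ballI)
    fix k assume k: "k \<in> {..2*M}"
    show "(fps_X^(ee M k) * (qb (fps_X^4) (2*M) k * Q n)) $ n = 0"
    proof (cases "n < ee M k")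
      case True then show ?thesis by (simp add: fps_X_power_mult_nth)
    next
      case False
      hence le: "ee M k \<le> n" by simp
      have ne: "ee M k \<noteq> n" using assms(1) k by auto
      have "(qb (fps_X^4) (2*M) k * Q n) $ (n - ee M k) = (1::F) $ (n - ee M k)"
        by (rule cg_nth[OF key_term[OF le assms(2)]]) (use k in auto)
      thus ?thesis using le ne by (simp add: fps_X_power_mult_nth)
    qed
  qed
  finally show ?thesis .
qed


definition KK :: "nat \<Rightarrow> nat set" where "KK n = {k\<in>{1..n}. \<not> 4 dvd k}"
definition DD :: "nat \<Rightarrow> F" where "DD n = (\<Prod>k\<in>{1..n}. 1 + fps_X^k)"
definition Od :: "nat \<Rightarrow> F" where "Od n = (\<Prod>k\<in>{k\<in>{1..n}. odd k}. 1 + fps_X^k)"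
definition Ev :: "nat \<Rightarrow> F" where "Ev n = (\<Prod>k\<in>{k\<in>{1..n}. even k}. 1 + fps_X^k)"

lemma geo_inv: "0 < k \<Longrightarrow> geo k * (1 + fps_X^k) = 1"
proof (rule fps_ext)
  fix j assume k: "0 < k"
  have "(geo k * (1 + fps_X^k)) $ j = geo k $ j + (if j < k then 0 else geo k $ (j - k))"
    by (simp add: distrib_left fps_X_power_mult_right_nth)
  also have "\<dots> = (1::F) $ j"
  proof (cases "j < k")
    case True
    then show ?thesis using k by (cases "j = 0") (auto simp: geo_def dest: dvd_imp_le)
  next
    case False
    hence "k dvd (j - k) \<longleftrightarrow> k dvd j" by (simp add: dvd_minus_self)
    moreover have "j \<noteq> 0" using False k by simp
    ultimately show ?thesis using False by (simp add: geo_def bit_add_self)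
  qed
  finally show "(geo k * (1 + fps_X^k)) $ j = (1::F) $ j" .
qed

lemma AQ: "cg n ((\<Prod>k\<in>KK n. 1 + fps_X^k) * Q n) (DD n)"
proof -
  let ?S = "{k\<in>{1..n}. 4 dvd k}"
  have "Q n = (\<Prod>k\<in>(\<lambda>i. 4*i) ` {1..n}. 1 + fps_X^k)"
    unfolding Q_def by (subst prod.reindex) (auto simp: inj_on_def)
  moreover have "cg n (\<Prod>k\<in>(\<lambda>i. 4*i) ` {1..n}. 1 + fps_X^k) (\<Prod>k\<in>?S. 1 + fps_X^k)"
  proof (rule trunc_prod[where h="\<lambda>k. k"])
    show "?S \<subseteq> (\<lambda>i. 4*i) ` {1..n}"
    proof
      fix k assume "k \<in> ?S"
      then obtain i where "k = 4*i" "1 \<le> k" "k \<le> n" by auto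
      thus "k \<in> (\<lambda>i. 4*i) ` {1..n}" by auto
    qed
  qed auto
  ultimately have c: "cg n (Q n) (\<Prod>k\<in>?S. 1 + fps_X^k)" by simp
  have "(\<Prod>k\<in>KK n. 1 + fps_X^k) * (\<Prod>k\<in>?S. 1 + fps_X^k) = (DD n :: F)"
    unfolding DD_def KK_def by (subst prod.union_disjoint[symmetric]) (auto intro: prod.cong)
  moreover have "cg n ((\<Prod>k\<in>KK n. 1 + fps_X^k) * Q n) ((\<Prod>k\<in>KK n. 1 + fps_X^k) * (\<Prod>k\<in>?S. 1 + fps_X^k))"
    by (rule cg_mult[OF cg_refl c])
  ultimately show ?thesis by simp
qed

lemma DD_sq: "cg n (DD n * DD n) (Ev n)"
proof -
  have "DD n * DD n = (\<Prod>k\<in>{1..n}. 1 + fps_X^(2*k))"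
    unfolding DD_def by (simp add: prod.distrib[symmetric] one_plus_sq)
  also have "\<dots> = (\<Prod>k\<in>(\<lambda>i. 2*i) ` {1..n}. 1 + fps_X^k)"
    by (subst prod.reindex) (auto simp: inj_on_def)
  finally have e: "DD n * DD n = (\<Prod>k\<in>(\<lambda>i. 2*i) ` {1..n}. 1 + fps_X^k)" .
  have "cg n (\<Prod>k\<in>(\<lambda>i. 2*i) ` {1..n}. 1 + fps_X^k) (Ev n)"
    unfolding Ev_def
  proof (rule trunc_prod[where h="\<lambda>k. k"])
    show "{k\<in>{1..n}. even k} \<subseteq> (\<lambda>i. 2*i) ` {1..n}"
    proof
      fix k assume "k \<in> {k\<in>{1..n}. even k}"
      then obtain i where "k = 2*i" "1 \<le> k" "k \<le> n" by auto
      thus "k \<in> (\<lambda>i. 2*i) ` {1..n}" by auto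
    qed
  qed auto
  with e show ?thesis by simp
qed

lemma DD_split: "DD n = Od n * Ev n"
  unfolding DD_def Od_def Ev_def by (subst prod.union_disjoint[symmetric]) (auto intro: prod.cong)

lemma Odd_trunc:
  assumes "n < 4*M"
  shows "cg n (OddP M) (Od n)"
proof -
  let ?A = "(\<lambda>j. 4*j+1) ` {..<M}" and ?B = "(\<lambda>j. 4*j+3) ` {..<M}"
  have "OddP M = (\<Prod>k\<in>?A. 1 + fps_X^k) * (\<Prod>k\<in>?B. 1 + fps_X^k)"
    unfolding OddP_def by (simp add: prod.reindex inj_on_def)
  also have "\<dots> = (\<Prod>k\<in>?A \<union> ?B. 1 + fps_X^k)"
  proof -
    have disj: "?A \<inter> ?B = {}" by (auto; presburger)
    show ?thesis by (rule prod.union_disjoint[symmetric]) (use disj in auto)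
  qed
  finally have e: "OddP M = (\<Prod>k\<in>?A \<union> ?B. 1 + fps_X^k)" .
  have "cg n (\<Prod>k\<in>?A \<union> ?B. 1 + fps_X^k) (Od n)"
    unfolding Od_def
  proof (rule trunc_prod[where h="\<lambda>k. k"])
    show "{k\<in>{1..n}. odd k} \<subseteq> ?A \<union> ?B"
    proof
      fix k assume k: "k \<in> {k\<in>{1..n}. odd k}"
      hence "k mod 4 = 1 \<or> k mod 4 = 3" by auto presburger
      moreover have "k = 4*(k div 4) + k mod 4" by simp
      moreover have "k div 4 < M" using k assms by auto
      ultimately show "k \<in> ?A \<union> ?B" by (metis (no_types, lifting) UnI1 UnI2 image_eqI lessThan_iff)
    qed
  next
    fix k assume "k \<in> ?A \<union> ?B - {k\<in>{1..n}. odd k}"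
    thus "n < k" by auto
  qed auto
  with e show ?thesis by simp
qed

lemma Ev0: "Ev n $ 0 = 1"
  unfolding Ev_def by (rule prod_nth0) auto

lemma main_fps:
  assumes "M = 2*n+1"
  shows "(\<Prod>k\<in>KK n. geo k) $ n = (OddP M * Q n) $ n"
proof -
  let ?P = "\<Prod>k\<in>KK n. geo k" and ?A = "\<Prod>k\<in>KK n. 1 + fps_X^k"
  have PA: "?P * ?A = 1"
    by (simp add: prod.distrib[symmetric] geo_inv KK_def)
  have "cg n ((Od n * DD n) * Ev n) (1 * Ev n)"
  proof -
    have eq: "(Od n * DD n) * Ev n = DD n * DD n" using DD_split[of n] by (simp add: algebra_simps)
    show ?thesis using DD_sq[of n] by (simp only: eq mult_1)
  qed
  hence OD: "cg n (Od n * DD n) 1" using cg_cancel Ev0 by simp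
  have e1: "?A * OddP M * Q n = (?A * Q n) * OddP M" by (simp add: algebra_simps)
  have c0: "cg n ((?A * Q n) * OddP M) (DD n * Od n)"
    by (rule cg_mult[OF AQ Odd_trunc]) (use assms in simp)
  have "cg n (?A * OddP M * Q n) (Od n * DD n)" using c0 unfolding e1 by (simp add: mult.commute)
  hence c1: "cg n (?A * OddP M * Q n) 1" using OD by (rule cg_trans)
  have "cg n (?P * (?A * OddP M * Q n)) (?P * 1)" by (rule cg_mult[OF cg_refl c1])
  moreover have "?P * (?A * OddP M * Q n) = OddP M * Q n"
    by (metis PA mult.assoc mult_1)
  ultimately have "cg n (OddP M * Q n) ?P" by simp
  from cg_nth[OF this] show ?thesis by simp
qed

lemma mem_le_sum: "x \<in># M \<Longrightarrow> x \<le> sum_mset (M::nat multiset)"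
proof -
  assume "x \<in># M"
  then obtain M' where "M = add_mset x M'" by (blast dest: multi_member_split)
  thus ?thesis by simp
qed

lemma part_eq: "partitions_no_part_dvd 4 n = SK (KK n) n"
proof (intro set_eqI iffI)
  fix M assume "M \<in> partitions_no_part_dvd 4 n"
  hence M: "\<forall>x\<in>#M. 0 < x \<and> \<not> 4 dvd x" "sum_mset M = n" unfolding partitions_no_part_dvd_def by blast+
  have "set_mset M \<subseteq> KK n"
  proof
    fix x assume x: "x \<in># M"
    have "x \<le> n" using mem_le_sum[OF x] M(2) by simp
    moreover have "0 < x" "\<not> 4 dvd x" using M(1) x by blast+
    ultimately show "x \<in> KK n" unfolding KK_def by simp
  qed
  thus "M \<in> SK (KK n) n" using M(2) by (simp add: SK_def)
next
  fix M assume "M \<in> SK (KK n) n"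
  hence M: "set_mset M \<subseteq> KK n" "sum_mset M = n" unfolding SK_def by blast+
  have "\<forall>x\<in>#M. 0 < x \<and> \<not> 4 dvd x"
  proof
    fix x assume "x \<in># M"
    hence "x \<in> KK n" using M(1) by blast
    thus "0 < x \<and> \<not> 4 dvd x" unfolding KK_def by simp
  qed
  thus "M \<in> partitions_no_part_dvd 4 n" using M(2) unfolding partitions_no_part_dvd_def by blast
qed

lemma b4_fps: "of_nat (b 4 n) = (\<Prod>k\<in>KK n. geo k) $ n"
proof -
  have "finite (KK n)" "0 \<notin> KK n" by (auto simp: KK_def)
  from SK_count[OF this] show ?thesis unfolding b_def part_eq by simp
qed

lemma bit_of_nat: "(of_nat x :: bit) = (if even x then 0 else 1)"
  by (induction x) (auto simp: bit_add_self)

lemma b4_even: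
  assumes "\<And>M k. ee M k \<noteq> n"
  shows "even (b 4 n)"
proof -
  have "(of_nat (b 4 n) :: bit) = (OddP (2*n+1) * Q n) $ n"
    using b4_fps[of n] main_fps[OF refl, of n] by simp
  also have "\<dots> = 0" by (rule coeff_zero) (use assms in auto)
  finally have "(of_nat (b 4 n) :: bit) = 0" .
  thus ?thesis unfolding bit_of_nat by (auto split: if_splits)
qed


lemma sq_form:
  assumes "ee M k = N"
  shows "\<exists>s::nat. 8*N+1 = s^2"
proof -
  define m where "m = int k - int M"
  have "int (8*N+1) = 8*(2*m^2 - m) + 1" using ee_int[of M k] assms m_def by simp
  also have "\<dots> = (4*m - 1)^2" by (simp add: power2_eq_square algebra_simps)
  also have "\<dots> = int ((nat \<bar>4*m - 1\<bar>)^2)" by simp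
  finally show ?thesis by (metis of_nat_eq_iff)
qed

lemma odd_sq_mod8: "odd (p::nat) \<Longrightarrow> p^2 mod 8 = 1"
proof -
  assume "odd p"
  hence "p mod 8 = 1 \<or> p mod 8 = 3 \<or> p mod 8 = 5 \<or> p mod 8 = 7" by presburger
  moreover have "p^2 mod 8 = (p mod 8)^2 mod 8" by (simp add: power_mod)
  ultimately show ?thesis by auto
qed

lemma not_square:
  fixes p a u s :: nat
  assumes "prime p" "\<not> p dvd u" "s^2 = p^a * u" "odd a"
  shows False
proof -
  have u0: "u \<noteq> 0" using assms(2) by (metis dvd_0_right)
  have "p^a * u \<noteq> 0" using u0 assms(1) by (simp add: prime_gt_0_nat)
  hence s0: "s \<noteq> 0" using assms(3) by (metis power_0_left zero_less_numeral power_eq_0_iff)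
  have pe: "prime_elem p" using assms(1) by blast
  have "multiplicity p (s^2) = 2 * multiplicity p s"
    using prime_elem_multiplicity_power_distrib[OF pe s0] by simp
  moreover have "multiplicity p (p^a * u) = a"
  proof -
    have "multiplicity p (p^a * u) = multiplicity p (p^a) + multiplicity p u"
      by (rule prime_elem_multiplicity_mult_distrib[OF pe]) (use u0 assms(1) in \<open>auto simp: prime_gt_0_nat\<close>)
    also have "multiplicity p (p^a) = a" using pe by simp
    also have "multiplicity p u = 0" using not_dvd_imp_multiplicity_0[OF assms(2)] .
    finally show ?thesis by simp
  qed
  ultimately have "a = 2 * multiplicity p s" using assms(3) by simp
  with assms(4) show False by simp
qed

theorem theorem3p10:
  fixes p \<alpha> n i :: nat
  assumes "prime p" and "odd p" and "1 \<le> \<alpha>" and "1 \<le> i" and "i \<le> p - 1"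
  shows "even (b 4 (p ^ (2 * \<alpha>) * n + ((8 * i + p) * p ^ (2 * \<alpha> - 1) - 1) div 8))"
proof (rule b4_even)
  fix M k
  define a where "a = 2*\<alpha> - 1"
  define N where "N = p ^ (2 * \<alpha>) * n + ((8 * i + p) * p ^ (2 * \<alpha> - 1) - 1) div 8"
  have a2: "2*\<alpha> = Suc a" using assms(3) unfolding a_def by simp
  have pp: "p^(2*\<alpha>) = p * p^a" using a2 by simp
  have m8: "p^(2*\<alpha>) mod 8 = 1"
  proof -
    have "p^(2*\<alpha>) mod 8 = (p^2)^\<alpha> mod 8" by (simp add: power_mult)
    also have "\<dots> = ((p^2) mod 8)^\<alpha> mod 8" by (simp add: power_mod)
    also have "\<dots> = 1" using odd_sq_mod8[OF assms(2)] by simp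
    finally show ?thesis .
  qed
  obtain t where t: "p^(2*\<alpha>) = 8*t + 1" using m8 by (metis div_mod_decomp mult.commute)
  have "(8 * i + p) * p ^ (2 * \<alpha> - 1) - 1 = 8*(i*p^a + t)"
    using t pp unfolding a_def[symmetric] by (simp add: algebra_simps)
  hence "8*N + 1 = 8*(p^(2*\<alpha>)*n) + 8*(i*p^a) + 8*t + 1" unfolding N_def by simp
  also have "\<dots> = p^a * (8*p*n + 8*i + p)" using t pp by (simp add: algebra_simps)
  finally have NN: "8*N+1 = p^a * (8*p*n + 8*i + p)" .
  have nd: "\<not> p dvd (8*p*n + 8*i + p)"
  proof
    assume "p dvd (8*p*n + 8*i + p)"
    moreover have "p dvd 8*p*n + p" by simp
    ultimately have "p dvd 8*i" by (metis add.commute add.left_commute dvd_add_right_iff)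
    hence "p dvd 8 \<or> p dvd i" using prime_dvd_multD[OF assms(1)] by blast
    moreover have "\<not> p dvd i" using assms(4,5) by (auto dest: dvd_imp_le)
    moreover have "\<not> p dvd 8"
    proof
      assume "p dvd 8"
      hence "p dvd 2^3" by simp
      hence "p dvd 2" using prime_dvd_power[OF assms(1)] by blast
      hence "p \<le> 2" by (auto dest: dvd_imp_le)
      thus False using assms(1,2) prime_gt_1_nat[OF assms(1)] by (cases "p = 2") auto
    qed
    ultimately show False by blast
  qed
  show "ee M k \<noteq> N"
  proof
    assume "ee M k = N"
    then obtain s where "8*N+1 = s^2" using sq_form by blast
    hence "s^2 = p^a * (8*p*n + 8*i + p)" using NN by simp
    moreover have "odd a" unfolding a_def using assms(3) by presburger
    ultimately show False using not_square[OF assms(1) nd] by blast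
  qed
qed

end
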